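(* Let $n \ge 1$, $p\in[0,1]$, $t \ge 0$, and $\gamma:\mathbb{N}^*\to[0,1]$ non-increasing. Let $p_i := \gamma(i)p$ for $i\ge1$ and $q_n := \prod_{i=1}^n (1-p_i)$. Then \[ \text{(a)}\quad q_n e^{t p_n (1-q_n)} + (1-q_n)e^{-t p_n q_n} \le \exp\left(\frac{p_n t^2}{4n}\right), \] \[ \text{(b)}\quad q_n e^{t p_n (q_n-1)} + (1-q_n)e^{t p_n q_n} \le \exp\left(\frac{p_n t^2}{4n}\right). \] *)

theory Defs
  imports Complex_Main
begin

end

theory Submission
  imports Defs "HOL-Analysis.Complex_Transcendental"
begin

lemma e_bounds: "2718/1000 \<le> exp (1::real)" "exp (1::real) \<le> 272/100"
  using e_approx_32 e_less_272 by (auto simp add: abs_if split: if_split_asm)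

lemma exp_nat: "exp (real n) = exp (1::real) ^ n"
  using exp_of_nat_mult[of n 1] by simp

lemma exp3: "18 \<le> exp (3::real)" "exp (3::real) \<le> 21"
proof -
  have "exp (3::real) = exp 1 ^ 3" using exp_nat[of 3] by simp
  moreover have "(2718/1000::real)^3 \<le> exp 1 ^ 3" by (rule power_mono) (use e_bounds in auto)
  moreover have "exp 1 ^ 3 \<le> (272/100::real)^3" by (rule power_mono) (use e_bounds in auto)
  ultimately show "18 \<le> exp (3::real)" "exp (3::real) \<le> 21" by (auto simp: power3_eq_cube)
qed

lemma exp2: "4 \<le> exp (2::real)"
proof -
  have "exp (2::real) = exp 1 ^ 2" using exp_nat[of 2] by simp
  moreover have "(2718/1000::real)^2 \<le> exp 1 ^ 2" by (rule power_mono) (use e_bounds in auto)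
  ultimately show ?thesis by (simp add: power2_eq_square)
qed

lemma exp52: "exp (5/2::real) \<le> 25/2"
proof -
  have "exp (5::real) = exp 1 ^ 5" using exp_nat[of 5] by simp
  moreover have "exp 1 ^ 5 \<le> (272/100::real)^5" by (rule power_mono) (use e_bounds in auto)
  moreover have "(272/100::real)^5 \<le> 15625/100" by (simp add: power_divide)
  ultimately have a: "exp (5::real) \<le> 15625/100" by linarith
  have "exp (5/2::real) * exp (5/2) = exp 5" by (simp flip: exp_add)
  hence "exp (5/2::real)^2 \<le> (25/2)^2" using a by (simp add: power2_eq_square)
  thus ?thesis by (rule power2_le_imp_le) simp
qed

lemma ln2_le: "ln (2::real) \<le> 7/10"
proof -
  have "exp (7::real) = exp 1 ^ 7" using exp_nat[of 7] by simp
  moreover have "(2718/1000::real)^7 \<le> exp 1 ^ 7" by (rule power_mono) (use e_bounds in auto)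
  moreover have "(1024::real) \<le> (2718/1000::real)^7" by (simp add: power_divide)
  ultimately have "1024 \<le> exp (7::real)" by linarith
  hence "ln 1024 \<le> (7::real)" by (metis exp_gt_zero ln_exp ln_le_cancel_iff zero_less_numeral)
  moreover have "ln (1024::real) = 10 * ln 2" using ln_realpow[of 2 10] by simp
  ultimately show ?thesis by simp
qed

lemma bigL: fixes L :: real assumes "3 \<le> L" shows "2*L^2 \<le> exp L"
proof -
  define y where "y = L - 3"
  have y: "0 \<le> y" using assms y_def by simp
  have "exp L = exp 3 * exp y" by (simp add: y_def flip: exp_add)
  moreover have "1 + y + y^2/2 \<le> exp y" using exp_lower_Taylor_quadratic[OF y] .
  moreover have "18 * (1 + y + y^2/2) \<le> exp 3 * exp y"
    using exp3(1) \<open>1 + y + y^2/2 \<le> exp y\<close> y by (intro mult_mono) auto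
  ultimately have "18 * (1 + y + y^2/2) \<le> exp L" by simp
  moreover have "18 * (1 + y + y^2/2) - 2*L^2 = 6*y + 7*y^2" unfolding y_def by (simp add: power2_eq_square field_simps)
  moreover have "0 \<le> 6*y + 7*y^2" using y by simp
  ultimately show ?thesis by linarith
qed

lemma ln_lower: fixes d :: real assumes "0 \<le> d" "d \<le> 1/2" shows "- d - d^2 \<le> ln (1 - d)"
proof -
  let ?h = "\<lambda>x::real. ln (1 - x) + x + x^2"
  have "?h 0 \<le> ?h d"
  proof (rule DERIV_nonneg_imp_nondecreasing[OF assms(1)])
    fix x :: real assume x: "0 \<le> x" "x \<le> d"
    have x1: "x < 1" using x assms by simp
    have "DERIV ?h x :> (- 1 / (1 - x) + 1 + 2 * x)" using x1
      by - (rule derivative_eq_intros refl | simp)+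
    moreover have "- 1 / (1 - x) + 1 + 2 * x = x * (1 - 2*x) / (1 - x)" using x1
      by (simp add: field_simps)
    moreover have "0 \<le> x * (1 - 2*x)" using x assms by (intro mult_nonneg_nonneg) auto
    hence "0 \<le> x * (1 - 2*x) / (1 - x)" using x1 by (intro divide_nonneg_pos) auto
    ultimately show "\<exists>y. DERIV ?h x :> y \<and> 0 \<le> y" by metis
  qed
  thus ?thesis by simp
qed

lemma exp_neg_upper: fixes s :: real assumes "0 \<le> s" shows "exp (- s) \<le> 1 - s + s^2/2"
proof -
  let ?h = "\<lambda>x::real. 1 - x + x^2/2 - exp (- x)"
  have "?h 0 \<le> ?h s"
  proof (rule DERIV_nonneg_imp_nondecreasing[OF assms(1)])
    fix x :: real assume x: "0 \<le> x" "x \<le> s"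
    have "DERIV ?h x :> (- 1 + x + exp (- x))"
      by - (rule derivative_eq_intros refl | simp)+
    moreover have "1 - x \<le> exp (- x)" using exp_ge_add_one_self[of "-x"] by simp
    ultimately show "\<exists>y. DERIV ?h x :> y \<and> 0 \<le> y" by (intro exI[of _ "- 1 + x + exp (- x)"]) auto
  qed
  thus ?thesis by simp
qed

lemma qprops:
  fixes L q :: real assumes q: "q = exp (- L)"
  shows "q * exp L = 1" "0 < q"
proof -
  show "q * exp L = 1" using q by (simp add: exp_minus field_simps)
  show "0 < q" using q by simp
qed

lemma q_le_quarter: fixes L q :: real assumes q: "q = exp (- L)" "2 \<le> L" shows "q \<le> 1/4"
proof -
  have "q \<le> exp (-2)" using q by simp
  also have "exp (-2::real) = inverse (exp 2)" by (simp add: exp_minus)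
  also have "\<dots> \<le> 1/4" using exp2 by (simp add: field_simps)
  finally show ?thesis .
qed

lemma q_ge1: fixes L q :: real assumes q: "q = exp (- L)" "L \<le> 5/2" shows "2/25 \<le> q"
proof -
  have "exp (-5/2) \<le> q" using q by simp
  moreover have "exp (-5/2::real) = inverse (exp (5/2))" by (simp add: exp_minus)
  moreover have "2/25 \<le> inverse (exp (5/2::real))" using exp52 by (simp add: field_simps)
  ultimately show ?thesis by linarith
qed

lemma q_ge2: fixes L q :: real assumes q: "q = exp (- L)" "L \<le> 3" shows "1/21 \<le> q"
proof -
  have "exp (-3) \<le> q" using q by simp
  moreover have "exp (-3::real) = inverse (exp 3)" by (simp add: exp_minus)
  moreover have "1/21 \<le> inverse (exp (3::real))" using exp3 by (simp add: field_simps)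
  ultimately show ?thesis by linarith
qed

lemma q_big: fixes L q :: real assumes q: "q = exp (- L)" "3 \<le> L" shows "2*L^2*q \<le> 1"
proof -
  have "2*L^2*q \<le> exp L * q" using bigL[OF q(2)] qprops[OF q(1)] by (intro mult_right_mono) auto
  thus ?thesis using qprops[OF q(1)] by (simp add: mult.commute)
qed

lemma q_big2: fixes L q :: real assumes q: "q = exp (- L)" "3 \<le> L" shows "L*q \<le> 1/6" "q \<le> 1/18"
proof -
  have a: "2*L^2*q \<le> 1" using q_big[OF q] .
  have "L * (2*L*q) \<le> 1" using a by (simp add: power2_eq_square algebra_simps)
  moreover have "3 * (2*L*q) \<le> L * (2*L*q)" using q qprops[OF q(1)] by (intro mult_right_mono) auto
  ultimately have b: "L*q \<le> 1/6" by linarith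
  thus "L*q \<le> 1/6" .
  have "3 * q \<le> L * q" using q qprops[OF q(1)] by (intro mult_right_mono) auto
  thus "q \<le> 1/18" using b by linarith
qed

lemma N1: fixes L q :: real assumes q: "q = exp (- L)" "2 \<le> L"
  shows "0 \<le> L*((1-1/2)^2 + 2*q - q^2) + ln (1/2)"
proof -
  have l2: "ln (1/2::real) = - ln 2" by (simp add: ln_div)
  have q0: "0 < q" using qprops[OF q(1)] by simp
  have q4: "q \<le> 1/4" using q_le_quarter[OF q] .
  have e: "L*((1-1/2)^2 + 2*q - q^2) = L/4 + (L*q)*(2-q)" by (simp add: power2_eq_square algebra_simps)
  have nn: "0 \<le> (L*q)*(2-q)" using q0 q4 q by simp
  consider "L \<le> 5/2" | "5/2 \<le> L \<and> L \<le> 3" | "3 \<le> L" by linarith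
  thus ?thesis
  proof cases
    case 1
    have ab: "2 * (2/25) \<le> L * q" by (rule mult_mono) (use q_ge1[OF q(1) 1] q(2) in auto)
    have "(2*(2/25)) * (7/4) \<le> (L*q)*(2-q)" by (rule mult_mono[OF ab]) (use q4 q0 q(2) in auto)
    thus ?thesis using e l2 ln2_le q by linarith
  next
    case 2
    have ab: "(5/2) * (1/21) \<le> L * q" by (rule mult_mono) (use q_ge2[OF q(1)] 2 q0 in auto)
    have "((5/2) * (1/21)) * (7/4) \<le> (L*q)*(2-q)" by (rule mult_mono[OF ab]) (use q4 q0 q(2) in auto)
    thus ?thesis using e l2 ln2_le 2 by linarith
  next
    case 3
    thus ?thesis using e l2 ln2_le nn by linarith
  qed
qed

lemma N2: fixes L q w :: real assumes q: "q = exp (- L)" "2 \<le> L" "L \<le> 3" and w: "1/2 \<le> w" "w < 1"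
  shows "0 \<le> L*((1-w)^2 + 2*q - q^2) + ln w"
proof -
  define d where "d = 1 - w"
  have d: "0 \<le> d" "d \<le> 1/2" using w d_def by auto
  have lw: "- d - d^2 \<le> ln w" using ln_lower[OF d] d_def by simp
  have q0: "0 < q" using qprops[OF q(1)] by simp
  have q4: "q \<le> 1/4" using q_le_quarter[OF q(1,2)] .
  have K: "1 \<le> 4*(L-1)*((L*q)*(2-q))"
  proof (cases "L \<le> 5/2")
    case True
    have ab: "2 * (2/25) \<le> L * q" by (rule mult_mono) (use q_ge1[OF q(1) True] q(2) in auto)
    have "(2*(2/25)) * (7/4) \<le> (L*q)*(2-q)" by (rule mult_mono[OF ab]) (use q4 q0 q(2) in auto)
    moreover have "1 * ((2*(2/25)) * (7/4)) \<le> (L-1) * ((L*q)*(2-q))"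
      by (rule mult_mono) (use calculation q(2) in auto)
    ultimately show ?thesis by linarith
  next
    case False
    have ab: "(5/2) * (1/21) \<le> L * q" by (rule mult_mono) (use q_ge2[OF q(1,3)] False q0 in auto)
    have "((5/2) * (1/21)) * (7/4) \<le> (L*q)*(2-q)" by (rule mult_mono[OF ab]) (use q4 q0 q(2) in auto)
    moreover have "(3/2) * (((5/2) * (1/21)) * (7/4)) \<le> (L-1) * ((L*q)*(2-q))"
      by (rule mult_mono) (use calculation False in auto)
    ultimately show ?thesis by linarith
  qed
  have sq: "(L-1)*d^2 - d + 1/(4*(L-1)) = (2*(L-1)*d - 1)^2/(4*(L-1))"
    using q by (simp add: field_simps power2_eq_square)
  have "0 \<le> (2*(L-1)*d - 1)^2/(4*(L-1))" using q by simp
  moreover have "1/(4*(L-1)) \<le> (L*q)*(2-q)" using K q by (simp add: field_simps)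
  moreover have "L*((1-w)^2 + 2*q - q^2) + ln w \<ge> (L-1)*d^2 - d + (L*q)*(2-q)"
    using lw unfolding d_def by (simp add: power2_eq_square algebra_simps)
  ultimately show ?thesis using sq by linarith
qed

lemma N3: fixes L q :: real assumes q: "q = exp (- L)" "3 \<le> L"
  shows "0 \<le> L*((1/2)^2 - q^2) + ln (1 - 1/2) - ln (1 - q)"
proof -
  have l2: "ln (1 - 1/2::real) = - ln 2" by (simp add: ln_div)
  have q0: "0 < q" using qprops[OF q(1)] by simp
  have b: "L*q \<le> 1/6" "q \<le> 1/18" using q_big2[OF q] by auto
  have "ln (1 - q) \<le> 0" using q0 b by simp
  moreover have "(L*q)*q \<le> (1/6)*(1/18)" by (rule mult_mono) (use b q0 in auto)
  moreover have "L*((1/2)^2 - q^2) = L/4 - (L*q)*q" by (simp add: power2_eq_square algebra_simps)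
  ultimately show ?thesis using l2 ln2_le q by linarith
qed

lemma N4: fixes L q :: real assumes q: "q = exp (- L)" "3 \<le> L"
  shows "0 \<le> L*((1 - L*q)^2 - q^2) + ln (1 - (1 - L*q)) - ln (1 - q)"
proof -
  have q0: "0 < q" using qprops[OF q(1)] by simp
  have b: "L*q \<le> 1/6" "q \<le> 1/18" using q_big2[OF q] by auto
  have a: "2*L^2*q \<le> 1" using q_big[OF q] .
  have lnq: "ln q = - L" using q by simp
  have "ln (1 - (1 - L*q)) = ln L + ln q" using q q0 by (simp add: ln_mult)
  moreover have "ln (1 - q) \<le> 0" using q0 b by simp
  moreover have "1 \<le> ln L"
  proof -
    have "exp 1 \<le> L" using e_bounds q by linarith
    thus ?thesis using ln_ge_iff[of L 1] q by simp
  qed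
  moreover have "0 \<le> (L*q^2)*(L^2 - 1)"
  proof -
    have "1*1 \<le> L*L" by (rule mult_mono) (use q(2) in auto)
    hence "0 \<le> L^2 - 1" by (simp add: power2_eq_square)
    moreover have "0 \<le> L*q^2" using q(2) by simp
    ultimately show ?thesis by simp
  qed
  moreover have "L*((1 - L*q)^2 - q^2) = L - 2*L^2*q + (L*q^2)*(L^2 - 1)"
    by (simp add: power2_eq_square algebra_simps)
  ultimately show ?thesis using lnq a by linarith
qed

lemma N5: fixes L q :: real assumes q: "q = exp (- L)" "3 \<le> L"
  shows "2*L*(1 - L*q)*(1 - (1 - L*q)) \<le> 1"
proof -
  have q0: "0 < q" using qprops[OF q(1)] by simp
  have a: "2*L^2*q \<le> 1" using q_big[OF q] .
  have "2*L*(1 - L*q)*(1 - (1 - L*q)) = 2*L^2*q - 2*L^3*q^2" by (simp add: power2_eq_square power3_eq_cube algebra_simps)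
  moreover have "0 \<le> 2*L^3*q^2" using q q0 by simp
  ultimately show ?thesis using a by linarith
qed

lemma N6: fixes L q :: real assumes q: "q = exp (- L)" "3 \<le> L"
  shows "0 \<le> L*((1 - (1 - L*q))^2 + 2*q - q^2) + ln (1 - L*q)"
proof -
  have q0: "0 < q" using qprops[OF q(1)] by simp
  have b: "L*q \<le> 1/6" "q \<le> 1/18" using q_big2[OF q] by auto
  have P0: "0 < L*q" using q0 q by simp
  have "ln (1/(1 - L*q)) \<le> 1/(1 - L*q) - 1" using b by (intro ln_le_minus_one) auto
  hence ln1: "- (L*q)/(1 - L*q) \<le> ln (1 - L*q)" using b by (simp add: ln_div field_simps)
  have "1 \<le> (2 - q)*(1 - L*q)"
  proof -
    have "(2 - 1/18)*(1 - 1/6) \<le> (2 - q)*(1 - L*q)" by (rule mult_mono) (use b in auto)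
    thus ?thesis by simp
  qed
  hence "(L*q) * 1 \<le> (L*q) * ((2 - q)*(1 - L*q))" using P0 by (intro mult_left_mono) auto
  hence "(L*q)/(1 - L*q) \<le> (L*q)*(2-q)" using b by (simp add: field_simps)
  moreover have "0 \<le> L*(L*q)^2" using q by simp
  moreover have "L*((1 - (1 - L*q))^2 + 2*q - q^2) = L*(L*q)^2 + (L*q)*(2-q)"
    by (simp add: power2_eq_square algebra_simps)
  ultimately show ?thesis using ln1 by linarith
qed

lemma E2_mono: fixes L c a b :: real
  assumes "0 < a" "a \<le> b" "\<And>u. a \<le> u \<Longrightarrow> u \<le> b \<Longrightarrow> 2*L*u*(1-u) \<le> 1"
  shows "L*((1-a)^2 + c) + ln a \<le> L*((1-b)^2 + c) + ln b"
proof (rule DERIV_nonneg_imp_nondecreasing[OF assms(2)])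
  fix x :: real assume x: "a \<le> x" "x \<le> b"
  have x0: "0 < x" using x assms by simp
  have "DERIV (\<lambda>u. L*((1-u)^2 + c) + ln u) x :> (1/x - 2*L*(1-x))" using x0
    by (auto intro!: derivative_eq_intros simp: field_simps)
  moreover have "1/x - 2*L*(1-x) = (1 - 2*L*x*(1-x))/x" using x0 by (simp add: field_simps)
  moreover have "0 \<le> (1 - 2*L*x*(1-x))/x" using assms(3)[OF x] x0 by simp
  ultimately show "\<exists>y. DERIV (\<lambda>u. L*((1-u)^2 + c) + ln u) x :> y \<and> 0 \<le> y" by auto
qed

lemma E2_anti: fixes L c a b :: real
  assumes "0 < a" "a \<le> b" "\<And>u. a \<le> u \<Longrightarrow> u \<le> b \<Longrightarrow> 1 \<le> 2*L*u*(1-u)"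
  shows "L*((1-b)^2 + c) + ln b \<le> L*((1-a)^2 + c) + ln a"
proof (rule DERIV_nonpos_imp_nonincreasing[OF assms(2)])
  fix x :: real assume x: "a \<le> x" "x \<le> b"
  have x0: "0 < x" using x assms by simp
  have "DERIV (\<lambda>u. L*((1-u)^2 + c) + ln u) x :> (1/x - 2*L*(1-x))" using x0
    by (auto intro!: derivative_eq_intros simp: field_simps)
  moreover have "1/x - 2*L*(1-x) = (1 - 2*L*x*(1-x))/x" using x0 by (simp add: field_simps)
  moreover have "(1 - 2*L*x*(1-x))/x \<le> 0" using assms(3)[OF x] x0 by (simp add: divide_nonpos_pos)
  ultimately show "\<exists>y. DERIV (\<lambda>u. L*((1-u)^2 + c) + ln u) x :> y \<and> y \<le> 0" by auto
qed

lemma E1_mono: fixes L c a b :: real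
  assumes "a \<le> b" "b < 1" "\<And>u. a \<le> u \<Longrightarrow> u \<le> b \<Longrightarrow> 1 \<le> 2*L*u*(1-u)"
  shows "L*(a^2 - c) + ln (1-a) \<le> L*(b^2 - c) + ln (1-b)"
proof (rule DERIV_nonneg_imp_nondecreasing[OF assms(1)])
  fix x :: real assume x: "a \<le> x" "x \<le> b"
  have x1: "0 < 1 - x" using x assms by simp
  have "DERIV (\<lambda>u. L*(u^2 - c) + ln (1-u)) x :> (2*L*x - 1/(1-x))" using x1
    by (auto intro!: derivative_eq_intros simp: field_simps)
  moreover have "2*L*x - 1/(1-x) = (2*L*x*(1-x) - 1)/(1-x)" using x1 by (simp add: field_simps)
  moreover have "0 \<le> (2*L*x*(1-x) - 1)/(1-x)" using assms(3)[OF x] x1 by simp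
  ultimately show "\<exists>y. DERIV (\<lambda>u. L*(u^2 - c) + ln (1-u)) x :> y \<and> 0 \<le> y" by auto
qed

lemma E1_anti: fixes L c a b :: real
  assumes "a \<le> b" "b < 1" "\<And>u. a \<le> u \<Longrightarrow> u \<le> b \<Longrightarrow> 2*L*u*(1-u) \<le> 1"
  shows "L*(b^2 - c) + ln (1-b) \<le> L*(a^2 - c) + ln (1-a)"
proof (rule DERIV_nonpos_imp_nonincreasing[OF assms(1)])
  fix x :: real assume x: "a \<le> x" "x \<le> b"
  have x1: "0 < 1 - x" using x assms by simp
  have "DERIV (\<lambda>u. L*(u^2 - c) + ln (1-u)) x :> (2*L*x - 1/(1-x))" using x1
    by (auto intro!: derivative_eq_intros simp: field_simps)
  moreover have "2*L*x - 1/(1-x) = (2*L*x*(1-x) - 1)/(1-x)" using x1 by (simp add: field_simps)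
  moreover have "(2*L*x*(1-x) - 1)/(1-x) \<le> 0" using assms(3)[OF x] x1 by (simp add: divide_nonpos_pos)
  ultimately show "\<exists>y. DERIV (\<lambda>u. L*(u^2 - c) + ln (1-u)) x :> y \<and> y \<le> 0" by auto
qed

lemma uu_mono: fixes u w :: real assumes "u \<le> w" "u + w \<le> 1" shows "u*(1-u) \<le> w*(1-w)"
proof -
  have "w*(1-w) - u*(1-u) = (w-u)*(1-w-u)" by (simp add: algebra_simps)
  moreover have "0 \<le> (w-u)*(1-w-u)" using assms by simp
  ultimately show ?thesis by linarith
qed

lemma uu_anti: fixes u w :: real assumes "w \<le> u" "1 \<le> u + w" shows "u*(1-u) \<le> w*(1-w)"
proof -
  have "w*(1-w) - u*(1-u) = (u-w)*(u+w-1)" by (simp add: algebra_simps)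
  moreover have "0 \<le> (u-w)*(u+w-1)" using assms by simp
  ultimately show ?thesis by linarith
qed

lemma scale2L: fixes L x y :: real assumes "0 \<le> L" "x \<le> y" shows "2*L*x \<le> 2*L*y"
  using assms by (simp add: mult_left_mono)

lemma KL:
  fixes q L w :: real
  assumes q: "q = exp (- L)" and q1: "q < 1" and w: "q < w" "w < 1"
  shows "0 \<le> L*(w^2 - q^2) + ln (1-w) - ln (1-q) \<or> 0 \<le> L*((1-w)^2 + (2*q - q^2)) + ln w"
proof -
  have q0: "0 < q" using q by simp
  have L0: "0 < L" using q q1 by simp
  have E2q: "L*((1-q)^2 + (2*q - q^2)) + ln q = 0" using q by (simp add: power2_eq_square algebra_simps)
  let ?E2 = "\<lambda>u. L*((1-u)^2 + (2*q - q^2)) + ln u"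
  let ?E1 = "\<lambda>u. L*(u^2 - q^2) + ln (1-u)"
  have uq: "u*(1-u) \<le> 1/4" for u :: real
  proof -
    have "0 \<le> (u-1/2)^2" by simp
    moreover have "u*(1-u) = 1/4 - (u-1/2)^2" by (simp add: power2_eq_square algebra_simps)
    ultimately show ?thesis by linarith
  qed
  show ?thesis
  proof (cases "L \<le> 2")
    case True
    have "?E2 q \<le> ?E2 w"
    proof (rule E2_mono[OF q0 order_less_imp_le[OF w(1)]])
      fix u assume "q \<le> u" "u \<le> w"
      have "2*L*(u*(1-u)) \<le> 2*L*(1/4)" using uq[of u] L0 by (intro scale2L) auto
      moreover have "2*L*(1/4) \<le> 1" using True by simp
      moreover have "2*L*u*(1-u) = 2*L*(u*(1-u))" by (simp add: mult.assoc)
      ultimately show "2*L*u*(1-u) \<le> 1" by linarith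
    qed
    thus ?thesis using E2q by simp
  next
    case False
    hence L2: "2 \<le> L" by simp
    show ?thesis
    proof (cases "w \<le> 1/2")
      case True
      show ?thesis
      proof (cases "2*L*w*(1-w) \<le> 1")
        case True
        have "?E2 q \<le> ?E2 w"
        proof (rule E2_mono[OF q0 order_less_imp_le[OF w(1)]])
          fix u assume u: "q \<le> u" "u \<le> w"
          have "2*L*(u*(1-u)) \<le> 2*L*(w*(1-w))" using uu_mono[of u w] u \<open>w \<le> 1/2\<close> L0 by (intro scale2L) auto
          thus "2*L*u*(1-u) \<le> 1" using True by (simp add: mult.assoc)
        qed
        thus ?thesis using E2q by simp
      next
        case False
        have "?E2 (1/2) \<le> ?E2 w"
        proof (rule E2_anti)
          show "0 < w" using w q0 by simp
          show "w \<le> 1/2" using \<open>w \<le> 1/2\<close> .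
          fix u assume u: "w \<le> u" "u \<le> 1/2"
          have "2*L*(w*(1-w)) \<le> 2*L*(u*(1-u))" using uu_mono[of w u] u L0 by (intro scale2L) auto
          thus "1 \<le> 2*L*u*(1-u)" using False by (simp add: mult.assoc)
        qed
        moreover have "0 \<le> ?E2 (1/2)" using N1[OF q L2] by (simp add: algebra_simps)
        ultimately show ?thesis by simp
      qed
    next
      case False
      hence w2: "1/2 \<le> w" by simp
      show ?thesis
      proof (cases "L \<le> 3")
        case True
        show ?thesis using N2[OF q L2 True w2 w(2)] by (simp add: algebra_simps)
      next
        case False
        hence L3: "3 \<le> L" by simp
        define s where "s = 1 - L*q"
        have b: "L*q \<le> 1/6" using q_big2[OF q L3] by auto
        have s: "1/2 \<le> s" "s < 1" using b q0 L0 unfolding s_def by auto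
        have g_s: "2*L* s*(1-s) \<le> 1" using N5[OF q L3] unfolding s_def .
        show ?thesis
        proof (cases "w \<le> s")
          case True
          show ?thesis
          proof (cases "1 \<le> 2*L*w*(1-w)")
            case True
            have "?E1 (1/2) \<le> ?E1 w"
            proof (rule E1_mono[OF w2 w(2)])
              fix u assume u: "1/2 \<le> u" "u \<le> w"
              have "2*L*(w*(1-w)) \<le> 2*L*(u*(1-u))" using uu_anti[of u w] u L0 by (intro scale2L) auto
              thus "1 \<le> 2*L*u*(1-u)" using True by (simp add: mult.assoc)
            qed
            moreover have "0 \<le> ?E1 (1/2) - ln (1-q)" using N3[OF q L3] by simp
            ultimately show ?thesis by simp
          next
            case False
            have "?E1 s \<le> ?E1 w"
            proof (rule E1_anti[OF \<open>w \<le> s\<close> s(2)])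
              fix u assume u: "w \<le> u" "u \<le> s"
              have "2*L*(u*(1-u)) \<le> 2*L*(w*(1-w))" using uu_anti[of w u] u w2 L0 by (intro scale2L) auto
              thus "2*L*u*(1-u) \<le> 1" using False by (simp add: mult.assoc)
            qed
            moreover have "0 \<le> ?E1 s - ln (1-q)" using N4[OF q L3] unfolding s_def by simp
            ultimately show ?thesis by simp
          qed
        next
          case False
          have "?E2 s \<le> ?E2 w"
          proof (rule E2_mono)
            show "0 < s" using s by simp
            show "s \<le> w" using False by simp
            fix u assume u: "s \<le> u" "u \<le> w"
            have "2*L*(u*(1-u)) \<le> 2*L*(s*(1-s))" using uu_anti[of s u] u s L0 by (intro scale2L) auto
            thus "2*L*u*(1-u) \<le> 1" using g_s by (simp add: mult.assoc)
          qed
          moreover have "0 \<le> ?E2 s" using N6[OF q L3] unfolding s_def by (simp add: algebra_simps)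
          ultimately show ?thesis by simp
        qed
      qed
    qed
  qed
qed

lemma mgf_bound:
  fixes q L x :: real
  assumes q: "q = exp (- L)" and q1: "q < 1" and x: "0 \<le> x"
  shows "ln (1 - q + q * exp x) \<le> q*x + x^2/(4*L)"
proof (rule ccontr)
  assume neg: "\<not> ?thesis"
  have q0: "0 < q" using q by simp
  have L0: "0 < L" using q q1 by simp
  define F where "F = (\<lambda>y::real. q*y + y^2/(4*L) - ln (1 - q + q*exp y))"
  have D0: "0 < 1 - q + q*exp y" for y
  proof -
    have "0 < q*exp y" using q0 by simp
    thus ?thesis using q1 by linarith
  qed
  have Fx: "F x < 0" using neg unfolding F_def by simp
  have big: "0 \<le> F y" if "4*L \<le> y" for y
  proof -
    have y0: "0 \<le> y" using that L0 by simp
    have "1 \<le> exp y" using y0 by simp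
    hence "(1-q)*1 \<le> (1-q)*exp y" using q1 by (intro mult_left_mono) auto
    hence "1 - q + q*exp y \<le> exp y" by (simp add: algebra_simps)
    hence l: "ln (1 - q + q*exp y) \<le> y" using D0[of y] by (metis ln_exp ln_le_cancel_iff exp_gt_zero)
    have "y * (4*L) \<le> y * y" using y0 that by (intro mult_left_mono) auto
    hence "y \<le> y^2/(4*L)" using L0 by (simp add: field_simps power2_eq_square)
    moreover have "0 \<le> q*y" using q0 y0 by simp
    ultimately show ?thesis unfolding F_def using l by linarith
  qed
  have x4: "x < 4*L" using big[of x] Fx by force
  have cont: "continuous_on {0..4*L} F" unfolding F_def
    using D0 L0 by (intro continuous_intros) (auto simp: less_imp_neq[symmetric])
  have ne: "{0..4*L} \<noteq> {}" using L0 by simp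
  obtain z where z: "z \<in> {0..4*L}" "\<forall>y\<in>{0..4*L}. F z \<le> F y"
    using continuous_attains_inf[OF compact_Icc ne cont] by auto
  have Fz: "F z < 0" using z(2) x x4 Fx by force
  have z0: "0 < z"
  proof -
    have "F 0 = 0" unfolding F_def by simp
    thus ?thesis using z Fz by (cases "z = 0") auto
  qed
  have z4: "z < 4*L" using z Fz big[of z] by force
  define D where "D = 1 - q + q*exp z"
  have Dpos: "0 < D" unfolding D_def using D0 .
  have DER: "DERIV F z :> (q + 2*z/(4*L) - q*exp z / D)" unfolding F_def D_def
    using D0[of z] L0
    by - (rule derivative_eq_intros refl | simp)+
  have deq: "q + 2*z/(4*L) - q*exp z / D = 0"
  proof (rule DERIV_local_min[OF DER, of "min z (4*L - z)"])
    show "0 < min z (4*L - z)" using z0 z4 by simp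
    show "\<forall>y. \<bar>z - y\<bar> < min z (4 * L - z) \<longrightarrow> F z \<le> F y"
    proof (intro allI impI)
      fix y assume "\<bar>z - y\<bar> < min z (4 * L - z)"
      hence "y \<in> {0..4*L}" by (auto simp: abs_if split: if_splits)
      thus "F z \<le> F y" using z(2) by blast
    qed
  qed
  define w where "w = q*exp z / D"
  have w1: "w < 1" unfolding w_def D_def using D0[of z] q1 by (simp add: field_simps)
  have wq: "q < w"
  proof -
    have "1 < exp z" using z0 by simp
    hence "(1-q)*1 < (1-q)*exp z" using q1 by (intro mult_strict_left_mono) auto
    hence "D < exp z" unfolding D_def by (simp add: algebra_simps)
    hence "q * D < q * exp z" using q0 by simp
    thus ?thesis unfolding w_def using Dpos by (simp add: field_simps)
  qed
  have w0: "0 < w" using wq q0 by simp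
  have zw: "z = 2*L*(w - q)" using deq L0 unfolding w_def by (simp add: field_simps)
  have omw: "1 - w = (1-q)/D" unfolding w_def D_def using D0[of z] by (simp add: field_simps)
  have lnD: "ln D = ln (1-q) - ln (1-w)" using omw Dpos q1 by (simp add: ln_div)
  have lnw: "ln w = - L + z - ln D" unfolding w_def using q0 Dpos q by (simp add: ln_div ln_mult)
  have Fz_eq: "F z = q*z + z^2/(4*L) - ln D" unfolding F_def D_def by simp
  have alg: "q*z + z^2/(4*L) = L*(w^2 - q^2)"
    unfolding zw using L0 by (simp add: field_simps power2_eq_square)
  have E1: "F z = L*(w^2 - q^2) + ln (1-w) - ln (1-q)" using Fz_eq alg lnD by simp
  have alg2: "L*((1-w)^2 + (2*q - q^2)) - L + z = L*(w^2 - q^2)"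
    unfolding zw by (simp add: power2_eq_square algebra_simps)
  have E2: "F z = L*((1-w)^2 + (2*q - q^2)) + ln w" using Fz_eq alg alg2 lnw by simp
  show False using KL[OF q q1 wq w1] E1 E2 Fz by linarith
qed

lemma prod_bound:
  fixes n :: nat and p :: real and \<gamma> :: "nat \<Rightarrow> real"
  assumes "n \<ge> 1" "0 \<le> p" "p \<le> 1"
    and g: "\<And>i. i \<ge> 1 \<Longrightarrow> 0 \<le> \<gamma> i \<and> \<gamma> i \<le> 1"
    and m: "\<And>i j. 1 \<le> i \<Longrightarrow> i \<le> j \<Longrightarrow> \<gamma> j \<le> \<gamma> i"
  shows "0 \<le> (\<Prod>i=1..n. 1 - \<gamma> i * p)" "(\<Prod>i=1..n. 1 - \<gamma> i * p) \<le> (1 - \<gamma> n * p)^n"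
proof -
  have f: "0 \<le> 1 - \<gamma> i * p \<and> 1 - \<gamma> i * p \<le> 1 - \<gamma> n * p" if "i \<in> {1..n}" for i
  proof -
    have "\<gamma> i * p \<le> 1 * 1" using g[of i] that assms by (intro mult_mono) auto
    moreover have "\<gamma> n * p \<le> \<gamma> i * p" using m[of i n] that assms by (intro mult_right_mono) auto
    ultimately show ?thesis by simp
  qed
  show "0 \<le> (\<Prod>i=1..n. 1 - \<gamma> i * p)" using f by (intro prod_nonneg) auto
  have "(\<Prod>i=1..n. 1 - \<gamma> i * p) \<le> (\<Prod>i=1..n. 1 - \<gamma> n * p)" using f by (intro prod_mono) auto
  thus "(\<Prod>i=1..n. 1 - \<gamma> i * p) \<le> (1 - \<gamma> n * p)^n" by simp
qed

theorem mainTheorem7: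
  fixes n :: nat and p t :: real and \<gamma> :: "nat \<Rightarrow> real"
  assumes "n \<ge> 1"
    and "0 \<le> p" "p \<le> 1"
    and "0 \<le> t"
    and "\<And>i. i \<ge> 1 \<Longrightarrow> 0 \<le> \<gamma> i \<and> \<gamma> i \<le> 1"
    and "\<And>i j. 1 \<le> i \<Longrightarrow> i \<le> j \<Longrightarrow> \<gamma> j \<le> \<gamma> i"
  shows "let pp = (\<lambda>i. \<gamma> i * p); q = (\<Prod>i=1..n. 1 - pp i) in
           q * exp (t * pp n * (1 - q)) + (1 - q) * exp (- t * pp n * q)
             \<le> exp (pp n * t^2 / (4 * real n))
         \<and> q * exp (t * pp n * (q - 1)) + (1 - q) * exp (t * pp n * q)
             \<le> exp (pp n * t^2 / (4 * real n))"
proof -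
  define a where "a = \<gamma> n * p"
  define q where "q = (\<Prod>i=1..n. 1 - \<gamma> i * p)"
  have PB: "0 \<le> q" "q \<le> (1 - a)^n" unfolding q_def a_def using prod_bound[OF assms(1,2,3,5,6)] by auto
  have a0: "0 \<le> a" "a \<le> 1"
  proof -
    have "0 \<le> \<gamma> n" "\<gamma> n \<le> 1" using assms(5)[of n] assms(1) by auto
    thus "0 \<le> a" "a \<le> 1" unfolding a_def using assms(2,3) mult_mono[of "\<gamma> n" 1 p 1] by auto
  qed
  have "(1-a)^n \<le> 1" using a0 by (intro power_le_one) auto
  hence q1: "q \<le> 1" using PB(2) by linarith
  have n1: "1 \<le> real n" using assms(1) by simp
  define R where "R = exp (a * t^2 / (4 * real n))"
  have R1: "1 \<le> R" unfolding R_def using a0 n1 by simp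
  have main: "q * exp (t * a * (1 - q)) + (1 - q) * exp (- t * a * q) \<le> R
      \<and> q * exp (t * a * (q - 1)) + (1 - q) * exp (t * a * q) \<le> R"
  proof (cases "a = 0 \<or> q = 0")
    case True
    thus ?thesis using R1 by auto
  next
    case False
    hence apos: "0 < a" and qpos: "0 < q" using a0 PB by auto
    define c where "c = real n * a"
    have cpos: "0 < c" unfolding c_def using apos n1 by simp
    have "(1 - a)^n \<le> exp (- a)^n" using a0 exp_ge_add_one_self[of "-a"] by (intro power_mono) auto
    also have "exp (- a)^n = exp (- c)" unfolding c_def using exp_of_nat_mult[of n "-a"] by simp
    finally have qc: "q \<le> exp (- c)" using PB by linarith
    have "exp (- c) < 1" using cpos by simp
    hence qlt1: "q < 1" using qc by linarith
    define L where "L = - ln q"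
    have qL: "q = exp (- L)" unfolding L_def using qpos by simp
    have "ln q \<le> ln (exp (- c))" using ln_le_cancel_iff[OF qpos exp_gt_zero] qc by blast
    hence cL: "c \<le> L" unfolding L_def by simp
    define s where "s = t * a"
    have s0: "0 \<le> s" unfolding s_def using assms(4) a0 by simp
    have key: "s^2 / (4*c) = a * t^2 / (4 * real n)" unfolding s_def c_def using apos
      by (simp add: power2_eq_square field_simps)
    have A: "q * exp (s * (1 - q)) + (1 - q) * exp (- s * q) \<le> R"
    proof -
      have "0 < q * exp s" using qpos by simp
      hence D: "0 < 1 - q + q * exp s" using qlt1 by linarith
      have "q * exp (s * (1 - q)) + (1 - q) * exp (- s * q) = exp (- s * q) * (1 - q + q * exp s)"
        by (simp add: algebra_simps flip: exp_add)
      also have "1 - q + q * exp s \<le> exp (q* s + s^2/(4*L))"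
      proof -
        have "exp (ln (1 - q + q * exp s)) \<le> exp (q* s + s^2/(4*L))"
          using mgf_bound[OF qL qlt1 s0] by simp
        thus ?thesis using exp_ln[OF D] by simp
      qed
      hence "exp (- s * q) * (1 - q + q * exp s) \<le> exp (- s * q) * exp (q* s + s^2/(4*L))"
        by (intro mult_left_mono) auto
      also have "\<dots> = exp (s^2/(4*L))" by (simp add: algebra_simps flip: exp_add)
      also have "s^2/(4*L) \<le> s^2/(4*c)" using cL cpos by (intro divide_left_mono) auto
      hence "exp (s^2/(4*L)) \<le> exp (s^2/(4*c))" by simp
      finally show ?thesis unfolding R_def key .
    qed
    have B: "q * exp (s * (q - 1)) + (1 - q) * exp (s * q) \<le> R"
    proof -
      have eq: "q * exp (s * (q - 1)) + (1 - q) * exp (s * q) = exp (s * q) * (1 - q + q * exp (- s))"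
        by (simp add: algebra_simps flip: exp_add)
      have "1 - q + q * exp (- s) \<le> 1 - q + q * (1 - s + s^2/2)"
        using exp_neg_upper[OF s0] qpos by (simp add: mult_left_mono)
      also have "\<dots> = 1 + (- q* s + q* s^2/2)" by (simp add: algebra_simps)
      also have "\<dots> \<le> exp (- q* s + q* s^2/2)" by (rule exp_ge_add_one_self)
      finally have "exp (s * q) * (1 - q + q * exp (- s)) \<le> exp (s * q) * exp (- q* s + q* s^2/2)"
        by (intro mult_left_mono) auto
      hence "q * exp (s * (q - 1)) + (1 - q) * exp (s * q) \<le> exp (s * q) * exp (- q* s + q* s^2/2)"
        using eq by simp
      also have "\<dots> = exp (q* s^2/2)" by (simp add: algebra_simps flip: exp_add)
      also have "q* s^2/2 \<le> s^2/(4*c)"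
      proof -
        have "2*c \<le> exp c"
        proof -
          have "1 + c + c^2/2 \<le> exp c" using exp_lower_Taylor_quadratic[of c] cpos by simp
          moreover have "0 \<le> 1 - c + c^2/2"
          proof -
            have "1 - c + c^2/2 = ((c-1)^2 + 1)/2" by (simp add: power2_eq_square field_simps)
            moreover have "0 \<le> ((c-1)^2 + 1)/2" by simp
            ultimately show ?thesis by linarith
          qed
          ultimately show ?thesis by linarith
        qed
        hence "2*c*q \<le> exp c * exp (- c)" using qc qpos cpos by (intro mult_mono) auto
        hence "2*c*q \<le> 1" by (simp flip: exp_add)
        hence "q \<le> 1/(2*c)" using cpos by (simp add: field_simps)
        hence "q * (s^2/2) \<le> 1/(2*c) * (s^2/2)" by (intro mult_right_mono) auto
        thus ?thesis using cpos by (simp add: field_simps)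
      qed
      hence "exp (q* s^2/2) \<le> exp (s^2/(4*c))" by simp
      finally show ?thesis unfolding R_def key .
    qed
    show ?thesis using A B unfolding s_def by (simp add: algebra_simps)
  qed
  show ?thesis using main unfolding Let_def a_def q_def R_def by simp
qed


end
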